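(* Let $\mu$ be a probability distribution on $(E,\mathscr{E})$, let $Q$ be an isometric involution of $L^{2}(\mu)$ given by a Markov kernel $Q$ on $E$ (i.e. $Qf(z)=\int f(z')Q(z,{\rm d}z')$) with $\mu Q=\mu$, and let $P_{1},P_{2}$ be $(\mu,Q)$-reversible Markov transition probabilities. Assume that either for every $z\in E$ and $A\in\mathscr{E}$, $P_{1}Q(z,A\cap\{z\}^{c})\geq P_{2}Q(z,A\cap\{z\}^{c})$, or for every $z\in E$ and $A\in\mathscr{E}$, $QP_{1}(z,A\cap\{z\}^{c})\geq QP_{2}(z,A\cap\{z\}^{c})$. Then for any $\lambda\in[0,1)$: for every $f\in L^{2}(\mu)$ with $Qf=f$, ${\rm var}_{\lambda}(f,P_{1})\leq{\rm var}_{\lambda}(f,P_{2})$, and for every $f\in L^{2}(\mu)$ with $Qf=-f$, ${\rm var}_{\lambda}(f,P_{1})\geq{\rm var}_{\lambda}(f,P_{2})$.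
   Context: $\langle f,g\rangle_{\mu}=\int fg\,{\rm d}\mu$. An isometric involution is a linear operator $Q$ on $L^{2}(\mu)$ with $\langle Qf,Qg\rangle_{\mu}=\langle f,g\rangle_{\mu}$ and $Q^{2}={\rm Id}$. Compositions of kernels: $T_{1}T_{2}(z,A)=\int T_{1}(z,{\rm d}z')T_{2}(z',A)$. $P$ is $(\mu,Q)$-reversible if $\langle Pf,g\rangle_{\mu}=\langle f,QPQg\rangle_{\mu}$ for all $f,g\in L^{2}(\mu)$. For $\lambda\in[0,1)$, $\bar f=f-\mu(f)$, ${\rm var}_{\lambda}(f,P)=\|\bar f\|_{\mu}^{2}+2\sum_{k\geq1}\lambda^{k}\langle\bar f,P^{k}\bar f\rangle_{\mu}$. *)

theory Defs
  imports "HOL-Probability.Probability"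
begin

definition markov_kernel :: "'a measure \<Rightarrow> ('a \<Rightarrow> 'a measure) \<Rightarrow> bool" where
  "markov_kernel M K \<longleftrightarrow> K \<in> measurable M (subprob_algebra M) \<and> (\<forall>z\<in>space M. prob_space (K z))"

definition kapp :: "('a \<Rightarrow> 'a measure) \<Rightarrow> ('a \<Rightarrow> real) \<Rightarrow> 'a \<Rightarrow> real" where
  "kapp K f = (\<lambda>z. \<integral>x. f x \<partial>K z)"

definition kcomp :: "('a \<Rightarrow> 'a measure) \<Rightarrow> ('a \<Rightarrow> 'a measure) \<Rightarrow> 'a \<Rightarrow> 'a measure" where
  "kcomp K1 K2 = (\<lambda>z. K1 z \<bind> K2)"

definition L2 :: "'a measure \<Rightarrow> ('a \<Rightarrow> real) \<Rightarrow> bool" where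
  "L2 mu f \<longleftrightarrow> f \<in> borel_measurable mu \<and> integrable mu (\<lambda>x. (f x)\<^sup>2)"

definition inner_mu :: "'a measure \<Rightarrow> ('a \<Rightarrow> real) \<Rightarrow> ('a \<Rightarrow> real) \<Rightarrow> real" where
  "inner_mu mu f g = (\<integral>x. f x * g x \<partial>mu)"

definition isometric_involution :: "'a measure \<Rightarrow> ('a \<Rightarrow> 'a measure) \<Rightarrow> bool" where
  "isometric_involution mu Q \<longleftrightarrow>
     (\<forall>f. L2 mu f \<longrightarrow> L2 mu (kapp Q f)) \<and>
     (\<forall>f g. L2 mu f \<longrightarrow> L2 mu g \<longrightarrow> inner_mu mu (kapp Q f) (kapp Q g) = inner_mu mu f g) \<and>
     (\<forall>f. L2 mu f \<longrightarrow> (AE z in mu. kapp Q (kapp Q f) z = f z))"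

definition muQ_reversible :: "'a measure \<Rightarrow> ('a \<Rightarrow> 'a measure) \<Rightarrow> ('a \<Rightarrow> 'a measure) \<Rightarrow> bool" where
  "muQ_reversible mu Q P \<longleftrightarrow>
     (\<forall>f g. L2 mu f \<longrightarrow> L2 mu g \<longrightarrow>
        inner_mu mu (kapp P f) g = inner_mu mu f (kapp Q (kapp P (kapp Q g))))"

definition var_lambda :: "'a measure \<Rightarrow> real \<Rightarrow> ('a \<Rightarrow> real) \<Rightarrow> ('a \<Rightarrow> 'a measure) \<Rightarrow> real" where
  "var_lambda mu lam f P =
     (let fb = (\<lambda>x. f x - (\<integral>y. f y \<partial>mu))
      in inner_mu mu fb fb + 2 * (\<Sum>k. lam ^ Suc k * inner_mu mu fb ((kapp P ^^ Suc k) fb)))"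

end

theory Submission
  imports Defs
begin

lemma abs_prod_le: "\<bar>a * b\<bar> \<le> (a\<^sup>2 + b\<^sup>2) / (2::real)"
proof -
  have "0 \<le> (\<bar>a\<bar> - \<bar>b\<bar>)\<^sup>2" by simp
  also have "\<dots> = a\<^sup>2 + b\<^sup>2 - 2 * \<bar>a * b\<bar>"
    by (simp add: power2_diff abs_mult)
  finally show ?thesis by simp
qed

lemma L2_meas: "L2 M f \<Longrightarrow> f \<in> borel_measurable M"
  by (simp add: L2_def)

lemma L2_int: "L2 M f \<Longrightarrow> integrable M (\<lambda>x. (f x)\<^sup>2)"
  by (simp add: L2_def)

lemma L2_prod_int:
  assumes "L2 M f" "L2 M g"
  shows "integrable M (\<lambda>x. f x * g x)"
proof (rule Bochner_Integration.integrable_bound[where f="\<lambda>x. (f x)\<^sup>2 + (g x)\<^sup>2"])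
  show "integrable M (\<lambda>x. (f x)\<^sup>2 + (g x)\<^sup>2)" using assms by (simp add: L2_def)
  show "(\<lambda>x. f x * g x) \<in> borel_measurable M" using assms by (simp add: L2_def borel_measurable_times)
  show "AE x in M. norm (f x * g x) \<le> norm ((f x)\<^sup>2 + (g x)\<^sup>2)"
  proof (rule AE_I2)
    fix x
    have "\<bar>f x * g x\<bar> \<le> (f x)\<^sup>2 + (g x)\<^sup>2"
      using abs_prod_le[of "f x" "g x"] by simp
    then show "norm (f x * g x) \<le> norm ((f x)\<^sup>2 + (g x)\<^sup>2)" by simp
  qed
qed

lemma L2_add:
  assumes "L2 M f" "L2 M g"
  shows "L2 M (\<lambda>x. f x + g x)"
proof -
  have "integrable M (\<lambda>x. (f x)\<^sup>2 + 2 * (f x * g x) + (g x)\<^sup>2)"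
    using assms L2_prod_int[OF assms] by (simp add: L2_def)
  then show ?thesis using assms by (simp add: L2_def power2_sum algebra_simps borel_measurable_add)
qed

lemma L2_scale:
  assumes "L2 M f"
  shows "L2 M (\<lambda>x. c * f x)"
  using assms by (simp add: L2_def power_mult_distrib borel_measurable_times)

lemma L2_uminus:
  assumes "L2 M f"
  shows "L2 M (\<lambda>x. - f x)"
  using L2_scale[OF assms, of "-1"] by simp

lemma L2_diff:
  assumes "L2 M f" "L2 M g"
  shows "L2 M (\<lambda>x. f x - g x)"
  using L2_add[OF assms(1) L2_uminus[OF assms(2)]] by simp

lemma L2_const:
  assumes "finite_measure M"
  shows "L2 M (\<lambda>x. c)"
  using assms by (simp add: L2_def finite_measure.integrable_const)

lemma L2_sum:
  assumes "\<And>k. L2 M (g k)"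
  shows "L2 M (\<lambda>x. \<Sum>k<(N::nat). g k x)"
proof (induction N)
  case 0
  then show ?case by (simp add: L2_def)
next
  case (Suc N)
  then show ?case using L2_add[OF Suc assms[of N]] by simp
qed

lemma ip_sym: "inner_mu M f g = inner_mu M g f"
  by (simp add: inner_mu_def mult.commute)

lemma ip_add_right:
  assumes "L2 M f" "L2 M g" "L2 M h"
  shows "inner_mu M f (\<lambda>x. g x + h x) = inner_mu M f g + inner_mu M f h"
  using L2_prod_int[OF assms(1,2)] L2_prod_int[OF assms(1,3)]
  by (simp add: inner_mu_def distrib_left)

lemma ip_add_left:
  assumes "L2 M f" "L2 M g" "L2 M h"
  shows "inner_mu M (\<lambda>x. g x + h x) f = inner_mu M g f + inner_mu M h f"
  using ip_add_right[OF assms] by (simp add: ip_sym)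

lemma ip_scale_right:
  "inner_mu M f (\<lambda>x. c * g x) = c * inner_mu M f g"
  by (simp add: inner_mu_def algebra_simps)

lemma ip_scale_left:
  "inner_mu M (\<lambda>x. c * g x) f = c * inner_mu M g f"
  by (simp add: inner_mu_def algebra_simps)

lemma ip_diff_right:
  assumes "L2 M f" "L2 M g" "L2 M h"
  shows "inner_mu M f (\<lambda>x. g x - h x) = inner_mu M f g - inner_mu M f h"
  using L2_prod_int[OF assms(1,2)] L2_prod_int[OF assms(1,3)]
  by (simp add: inner_mu_def right_diff_distrib)

lemma ip_diff_left:
  assumes "L2 M f" "L2 M g" "L2 M h"
  shows "inner_mu M (\<lambda>x. g x - h x) f = inner_mu M g f - inner_mu M h f"
  using ip_diff_right[OF assms] by (simp add: ip_sym)

lemma ip_uminus_right: "inner_mu M f (\<lambda>x. - g x) = - inner_mu M f g"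
  by (simp add: inner_mu_def)

lemma ip_uminus_left: "inner_mu M (\<lambda>x. - g x) f = - inner_mu M g f"
  by (simp add: inner_mu_def)

lemma ip_nonneg: "0 \<le> inner_mu M f f"
  by (simp add: inner_mu_def)

lemma ip_cong_AE:
  assumes "L2 M f" "L2 M g" "L2 M f'" "L2 M g'"
    and "AE x in M. f x = f' x" "AE x in M. g x = g' x"
  shows "inner_mu M f g = inner_mu M f' g'"
  unfolding inner_mu_def
  using assms by (intro integral_cong_AE) (auto simp: L2_def)

lemma ip_amgm:
  assumes "L2 M f" "L2 M g"
  shows "\<bar>inner_mu M f g\<bar> \<le> (inner_mu M f f + inner_mu M g g) / 2"
proof -
  have i1: "integrable M (\<lambda>x. f x * g x)" using L2_prod_int[OF assms] .
  have i2: "integrable M (\<lambda>x. (f x * f x + g x * g x) / 2)"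
    using L2_prod_int[OF assms(1) assms(1)] L2_prod_int[OF assms(2) assms(2)] by simp
  have "\<bar>inner_mu M f g\<bar> \<le> (\<integral>x. \<bar>f x * g x\<bar> \<partial>M)"
    unfolding inner_mu_def by (rule integral_abs_bound)
  also have "\<dots> \<le> (\<integral>x. (f x * f x + g x * g x) / 2 \<partial>M)"
  proof (rule integral_mono)
    show "integrable M (\<lambda>x. \<bar>f x * g x\<bar>)" using i1 by simp
    show "integrable M (\<lambda>x. (f x * f x + g x * g x) / 2)" using i2 .
    fix x
    show "\<bar>f x * g x\<bar> \<le> (f x * f x + g x * g x) / 2"
      using abs_prod_le[of "f x" "g x"] by (simp add: power2_eq_square)
  qed
  also have "\<dots> = (inner_mu M f f + inner_mu M g g) / 2"
    unfolding inner_mu_def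
    using L2_prod_int[OF assms(1) assms(1)] L2_prod_int[OF assms(2) assms(2)] by simp
  finally show ?thesis .
qed

lemma ip_diff_sq:
  assumes "L2 M f" "L2 M g"
  shows "inner_mu M (\<lambda>x. f x - g x) (\<lambda>x. f x - g x) \<le> 2 * inner_mu M f f + 2 * inner_mu M g g"
proof -
  have e: "inner_mu M (\<lambda>x. f x - g x) (\<lambda>x. f x - g x) = inner_mu M f f - 2 * inner_mu M f g + inner_mu M g g"
    using assms L2_diff[OF assms]
    by (simp add: ip_diff_left ip_diff_right ip_sym[of M g f])
  have "\<bar>inner_mu M f g\<bar> \<le> (inner_mu M f f + inner_mu M g g) / 2" by (rule ip_amgm[OF assms])
  then have c: "- inner_mu M f g \<le> (inner_mu M f f + inner_mu M g g) / 2" by (rule abs_le_D2)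
  have n1: "0 \<le> inner_mu M f f" and n2: "0 \<le> inner_mu M g g" by (rule ip_nonneg)+
  show ?thesis unfolding e using c n1 n2 by argo
qed

lemma bind_integral_nonneg:
  fixes g :: "'a \<Rightarrow> real"
  assumes K: "K \<in> measurable M (subprob_algebra N)" and ne: "space M \<noteq> {}"
    and g: "integrable (M \<bind> K) g" and nn: "\<And>x. 0 \<le> g x"
  shows "AE z in M. integrable (K z) g"
    and "integrable M (\<lambda>z. \<integral>y. g y \<partial>K z)"
    and "(\<integral>y. g y \<partial>(M \<bind> K)) = (\<integral>z. (\<integral>y. g y \<partial>K z) \<partial>M)"
proof -
  have sb: "sets (M \<bind> K) = sets N" by (rule sets_bind[OF sets_kernel[OF K] ne])
  have gm: "g \<in> borel_measurable N"
    using borel_measurable_integrable[OF g] measurable_cong_sets[OF sb refl] by blast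
  have eq: "(\<integral>\<^sup>+x. ennreal (g x) \<partial>(M \<bind> K)) = (\<integral>\<^sup>+z. (\<integral>\<^sup>+y. ennreal (g y) \<partial>K z) \<partial>M)"
    by (rule nn_integral_bind[OF _ K]) (use gm in measurable)
  have fin: "(\<integral>\<^sup>+x. ennreal (g x) \<partial>(M \<bind> K)) < \<infinity>"
    using g nn unfolding integrable_iff_bounded by simp
  have mi: "(\<lambda>z. \<integral>\<^sup>+y. ennreal (g y) \<partial>K z) \<in> borel_measurable M"
    by (rule measurable_compose[OF K nn_integral_measurable_subprob_algebra]) (use gm in measurable)
  have AEfin: "AE z in M. (\<integral>\<^sup>+y. ennreal (g y) \<partial>K z) \<noteq> \<infinity>"
    by (rule nn_integral_PInf_AE[OF mi]) (use fin eq in auto)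
  have gmK: "z \<in> space M \<Longrightarrow> g \<in> borel_measurable (K z)" for z
    using gm measurable_cong_sets[OF sets_kernel[OF K] refl] by blast
  show AEint: "AE z in M. integrable (K z) g"
    using AEfin
  proof (rule AE_mp, intro AE_I2 impI)
    fix z assume "z \<in> space M" "(\<integral>\<^sup>+y. ennreal (g y) \<partial>K z) \<noteq> \<infinity>"
    then show "integrable (K z) g"
      using gmK nn by (auto simp: integrable_iff_bounded top.not_eq_extremum)
  qed
  have AEeq: "AE z in M. ennreal (\<integral>y. g y \<partial>K z) = (\<integral>\<^sup>+y. ennreal (g y) \<partial>K z)"
    using AEint by eventually_elim (use nn in \<open>simp add: nn_integral_eq_integral\<close>)
  have m2: "(\<lambda>z. \<integral>y. g y \<partial>K z) \<in> borel_measurable M"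
    by (rule measurable_compose[OF K integral_measurable_subprob_algebra]) (use gm in measurable)
  have nn2: "0 \<le> (\<integral>y. g y \<partial>K z)" for z using nn by (simp add: integral_nonneg)
  have eq2: "(\<integral>\<^sup>+z. ennreal (\<integral>y. g y \<partial>K z) \<partial>M) = (\<integral>\<^sup>+z. (\<integral>\<^sup>+y. ennreal (g y) \<partial>K z) \<partial>M)"
    by (rule nn_integral_cong_AE[OF AEeq])
  show int2: "integrable M (\<lambda>z. \<integral>y. g y \<partial>K z)"
    unfolding integrable_iff_bounded using m2 nn2 eq2 eq fin by simp
  have "(\<integral>y. g y \<partial>(M \<bind> K)) = enn2real (\<integral>\<^sup>+x. ennreal (g x) \<partial>(M \<bind> K))"
    using gm sb by (intro integral_eq_nn_integral) (auto simp: nn measurable_cong_sets[OF sb refl])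
  also have "\<dots> = enn2real (\<integral>\<^sup>+z. ennreal (\<integral>y. g y \<partial>K z) \<partial>M)" using eq eq2 by simp
  also have "\<dots> = (\<integral>z. (\<integral>y. g y \<partial>K z) \<partial>M)"
    using m2 nn2 by (intro integral_eq_nn_integral[symmetric]) auto
  finally show "(\<integral>y. g y \<partial>(M \<bind> K)) = (\<integral>z. (\<integral>y. g y \<partial>K z) \<partial>M)" .
qed

lemma bind_integral:
  fixes g :: "'a \<Rightarrow> real"
  assumes K: "K \<in> measurable M (subprob_algebra N)" and ne: "space M \<noteq> {}"
    and g: "integrable (M \<bind> K) g"
  shows "AE z in M. integrable (K z) g"
    and "integrable M (\<lambda>z. \<integral>y. g y \<partial>K z)"
    and "(\<integral>y. g y \<partial>(M \<bind> K)) = (\<integral>z. (\<integral>y. g y \<partial>K z) \<partial>M)"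
proof -
  define gp where "gp x = max (g x) 0" for x
  define gn where "gn x = max (- g x) 0" for x
  have ip: "integrable (M \<bind> K) gp" unfolding gp_def using g by auto
  have in_: "integrable (M \<bind> K) gn" unfolding gn_def using g by auto
  have gsplit: "g x = gp x - gn x" for x unfolding gp_def gn_def by auto
  have gpn: "\<And>x. 0 \<le> gp x" and gnn: "\<And>x. 0 \<le> gn x" unfolding gp_def gn_def by auto
  note P = bind_integral_nonneg[OF K ne ip gpn] bind_integral_nonneg[OF K ne in_ gnn]
  have A: "AE z in M. integrable (K z) gp \<and> integrable (K z) gn"
    using P(1) P(4) by eventually_elim auto
  show "AE z in M. integrable (K z) g"
    using A by eventually_elim (simp add: gsplit[abs_def])
  have B: "AE z in M. (\<integral>y. g y \<partial>K z) = (\<integral>y. gp y \<partial>K z) - (\<integral>y. gn y \<partial>K z)"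
    using A by eventually_elim (simp add: gsplit[abs_def])
  have m: "(\<lambda>z. \<integral>y. g y \<partial>K z) \<in> borel_measurable M"
  proof -
    have sb: "sets (M \<bind> K) = sets N" by (rule sets_bind[OF sets_kernel[OF K] ne])
    have gm: "g \<in> borel_measurable N"
      using borel_measurable_integrable[OF g] measurable_cong_sets[OF sb refl] by blast
    show ?thesis
      by (rule measurable_compose[OF K integral_measurable_subprob_algebra]) (use gm in measurable)
  qed
  show int: "integrable M (\<lambda>z. \<integral>y. g y \<partial>K z)"
    by (rule integrable_cong_AE_imp[OF Bochner_Integration.integrable_diff[OF P(2) P(5)] m])
       (use B in \<open>auto elim: AE_mp\<close>)
  have "(\<integral>y. g y \<partial>(M \<bind> K)) = (\<integral>y. gp y \<partial>(M \<bind> K)) - (\<integral>y. gn y \<partial>(M \<bind> K))"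
    using ip in_ by (simp add: gsplit[abs_def])
  also have "\<dots> = (\<integral>z. (\<integral>y. gp y \<partial>K z) \<partial>M) - (\<integral>z. (\<integral>y. gn y \<partial>K z) \<partial>M)"
    using P(3) P(6) by simp
  also have "\<dots> = (\<integral>z. (\<integral>y. gp y \<partial>K z) - (\<integral>y. gn y \<partial>K z) \<partial>M)"
    using P(2) P(5) by simp
  also have "\<dots> = (\<integral>z. (\<integral>y. g y \<partial>K z) \<partial>M)"
    by (rule integral_cong_AE) (use B m P(2) P(5) in \<open>auto elim: AE_mp\<close>)
  finally show "(\<integral>y. g y \<partial>(M \<bind> K)) = (\<integral>z. (\<integral>y. g y \<partial>K z) \<partial>M)" .
qed

definition ikern :: "'a measure \<Rightarrow> ('a \<Rightarrow> 'a measure) \<Rightarrow> bool" where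
  "ikern M K \<longleftrightarrow> markov_kernel M K \<and> M \<bind> K = M"

lemma jensen_sq:
  fixes g :: "'a \<Rightarrow> real"
  assumes "prob_space N" "integrable N g" "integrable N (\<lambda>x. (g x)\<^sup>2)"
  shows "(\<integral>x. g x \<partial>N)\<^sup>2 \<le> (\<integral>x. (g x)\<^sup>2 \<partial>N)"
proof -
  interpret prob_space N by fact
  have "variance g = expectation (\<lambda>x. (g x)\<^sup>2) - (expectation g)\<^sup>2"
    using assms by (intro variance_eq) auto
  moreover have "0 \<le> variance g" by (simp add: integral_nonneg)
  ultimately show ?thesis by simp
qed

context prob_space
begin

lemma L2_integrable: "L2 M g \<Longrightarrow> integrable M g"
  unfolding L2_def by (auto intro: square_integrable_imp_integrable)

lemma ik_meas: "ikern M K \<Longrightarrow> K \<in> measurable M (subprob_algebra M)"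
  by (simp add: ikern_def markov_kernel_def)

lemma ik_sp:
  assumes "ikern M K" "z \<in> space M"
  shows "space (K z) = space M" "sets (K z) = sets M" "prob_space (K z)"
  using assms subprob_measurableD[OF ik_meas[OF assms(1)] assms(2)]
  by (auto simp: ikern_def markov_kernel_def)

lemma ik_bind: "ikern M K \<Longrightarrow> M \<bind> K = M"
  by (simp add: ikern_def)

lemma ik_kapp_meas:
  assumes "ikern M K" "g \<in> borel_measurable M"
  shows "kapp K g \<in> borel_measurable M"
  unfolding kapp_def
  by (rule measurable_compose[OF ik_meas[OF assms(1)] integral_measurable_subprob_algebra]) (use assms(2) in measurable)

lemma ik_int:
  assumes "ikern M K" "integrable M g"
  shows "AE z in M. integrable (K z) g" "integrable M (kapp K g)" "integral\<^sup>L M (kapp K g) = integral\<^sup>L M g"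
proof -
  have g': "integrable (M \<bind> K) g" using assms by (simp add: ik_bind)
  note B = bind_integral[OF ik_meas[OF assms(1)] not_empty g']
  show "AE z in M. integrable (K z) g" using B(1) .
  show "integrable M (kapp K g)" using B(2) by (simp add: kapp_def)
  show "integral\<^sup>L M (kapp K g) = integral\<^sup>L M g" using B(3) assms(1) by (simp add: kapp_def ik_bind)
qed

lemma ik_cong:
  assumes "ikern M K" "g \<in> borel_measurable M" "h \<in> borel_measurable M"
    and "AE x in M. g x = h x"
  shows "AE z in M. kapp K g z = kapp K h z"
proof -
  have K: "K \<in> measurable M (subprob_algebra M)" using ik_meas[OF assms(1)] .
  have pr: "Measurable.pred M (\<lambda>x. g x = h x)" using assms(2,3) by measurable
  have "AE x in M \<bind> K. g x = h x" using assms(4) ik_bind[OF assms(1)] by metis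
  then have "AE z in M. AE y in K z. g y = h y" using AE_bind[OF K pr] by simp
  then show ?thesis
  proof (rule AE_mp, intro AE_I2 impI)
    fix z assume z: "z \<in> space M" and ae: "AE y in K z. g y = h y"
    have "g \<in> borel_measurable (K z)" "h \<in> borel_measurable (K z)"
      using assms(2,3) measurable_cong_sets[OF ik_sp(2)[OF assms(1) z] refl] by auto
    then show "kapp K g z = kapp K h z"
      unfolding kapp_def by (intro integral_cong_AE) (use ae in auto)
  qed
qed

lemma ik_add:
  assumes "ikern M K" "integrable M g" "integrable M h"
  shows "AE z in M. kapp K (\<lambda>x. g x + h x) z = kapp K g z + kapp K h z"
  using ik_int(1)[OF assms(1,2)] ik_int(1)[OF assms(1,3)]
  by eventually_elim (simp add: kapp_def)

lemma ik_diff: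
  assumes "ikern M K" "integrable M g" "integrable M h"
  shows "AE z in M. kapp K (\<lambda>x. g x - h x) z = kapp K g z - kapp K h z"
  using ik_int(1)[OF assms(1,2)] ik_int(1)[OF assms(1,3)]
  by eventually_elim (simp add: kapp_def)

lemma ik_scale: "kapp K (\<lambda>x. c * g x) = (\<lambda>z. c * kapp K g z)"
  by (simp add: kapp_def)

lemma ik_const:
  assumes "ikern M K" "z \<in> space M"
  shows "kapp K (\<lambda>x. c) z = c"
proof -
  interpret K: prob_space "K z" using ik_sp(3)[OF assms] .
  show ?thesis by (simp add: kapp_def K.prob_space)
qed

lemma ik_L2:
  assumes "ikern M K" "L2 M g"
  shows "L2 M (kapp K g)" "inner_mu M (kapp K g) (kapp K g) \<le> inner_mu M g g"
proof -
  have g2: "integrable M (\<lambda>x. (g x)\<^sup>2)" using assms(2) by (simp add: L2_def)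
  have gm: "g \<in> borel_measurable M" using assms(2) by (simp add: L2_def)
  note I2 = ik_int[OF assms(1) g2]
  have km: "kapp K g \<in> borel_measurable M" by (rule ik_kapp_meas[OF assms(1) gm])
  have J: "AE z in M. (kapp K g z)\<^sup>2 \<le> kapp K (\<lambda>x. (g x)\<^sup>2) z"
    using I2(1)
  proof (rule AE_mp, intro AE_I2 impI)
    fix z assume z: "z \<in> space M" and i: "integrable (K z) (\<lambda>x. (g x)\<^sup>2)"
    interpret K: prob_space "K z" using ik_sp(3)[OF assms(1) z] .
    have gmz: "g \<in> borel_measurable (K z)"
      using gm measurable_cong_sets[OF ik_sp(2)[OF assms(1) z] refl] by auto
    have "integrable (K z) g" by (rule K.square_integrable_imp_integrable[OF gmz i])
    then show "(kapp K g z)\<^sup>2 \<le> kapp K (\<lambda>x. (g x)\<^sup>2) z"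
      unfolding kapp_def by (rule jensen_sq[OF K.prob_space_axioms _ i])
  qed
  have i3: "integrable M (\<lambda>z. (kapp K g z)\<^sup>2)"
  proof (rule Bochner_Integration.integrable_bound[OF I2(2)])
    show "(\<lambda>z. (kapp K g z)\<^sup>2) \<in> borel_measurable M" using km by measurable
    show "AE x in M. norm ((kapp K g x)\<^sup>2) \<le> norm (kapp K (\<lambda>x. (g x)\<^sup>2) x)"
      using J by eventually_elim auto
  qed
  show "L2 M (kapp K g)" using km i3 by (simp add: L2_def)
  have "inner_mu M (kapp K g) (kapp K g) = (\<integral>z. (kapp K g z)\<^sup>2 \<partial>M)"
    by (simp add: inner_mu_def power2_eq_square)
  also have "\<dots> \<le> (\<integral>z. kapp K (\<lambda>x. (g x)\<^sup>2) z \<partial>M)"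
    by (rule integral_mono_AE[OF i3 I2(2) J])
  also have "\<dots> = inner_mu M g g" using I2(3) by (simp add: inner_mu_def power2_eq_square)
  finally show "inner_mu M (kapp K g) (kapp K g) \<le> inner_mu M g g" .
qed

lemma ik_L2_add:
  assumes "ikern M K" "L2 M g" "L2 M h"
  shows "AE z in M. kapp K (\<lambda>x. g x + h x) z = kapp K g z + kapp K h z"
  using ik_add[OF assms(1) L2_integrable[OF assms(2)] L2_integrable[OF assms(3)]] .

lemma ik_L2_diff:
  assumes "ikern M K" "L2 M g" "L2 M h"
  shows "AE z in M. kapp K (\<lambda>x. g x - h x) z = kapp K g z - kapp K h z"
  using ik_diff[OF assms(1) L2_integrable[OF assms(2)] L2_integrable[OF assms(3)]] .

lemma ik_L2_cong:
  assumes "ikern M K" "L2 M g" "L2 M h" "AE x in M. g x = h x"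
  shows "AE z in M. kapp K g z = kapp K h z"
  using ik_cong[OF assms(1) L2_meas[OF assms(2)] L2_meas[OF assms(3)] assms(4)] .

end

context prob_space
begin

lemma mk_sp:
  assumes "markov_kernel M K" "z \<in> space M"
  shows "space (K z) = space M" "sets (K z) = sets M" "prob_space (K z)"
  using assms subprob_measurableD[of K M M z]
  by (auto simp: markov_kernel_def)

lemma mk_one:
  assumes "markov_kernel M K" "z \<in> space M" "\<And>y. y \<in> space M \<Longrightarrow> h y = 1"
  shows "kapp K h z = 1"
proof -
  interpret K: prob_space "K z" using mk_sp(3)[OF assms(1,2)] .
  have "kapp K h z = (\<integral>y. 1 \<partial>K z)"
    unfolding kapp_def by (rule Bochner_Integration.integral_cong) (use assms(3) mk_sp(1)[OF assms(1,2)] in auto)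
  then show ?thesis by (simp add: K.prob_space)
qed

lemma L2_indicator:
  assumes "A \<in> sets M"
  shows "L2 M (indicator A)"
proof -
  have "integrable M (indicator A :: 'a \<Rightarrow> real)"
    using assms emeasure_finite[of A, unfolded less_top] by (intro integrable_real_indicator) auto
  moreover have "(\<lambda>x. (indicator A x :: real)\<^sup>2) = indicator A"
    by (auto simp: indicator_def)
  ultimately show ?thesis using assms by (simp add: L2_def)
qed

lemma rev_invariant:
  assumes Q: "markov_kernel M Q" and P: "markov_kernel M P" and rev: "muQ_reversible M Q P"
  shows "M \<bind> P = M"
proof (rule measure_eqI)
  have PK: "P \<in> measurable M (subprob_algebra M)" using P by (simp add: markov_kernel_def)
  show sb: "sets (M \<bind> P) = sets M"
    by (rule sets_bind[OF sets_kernel[OF PK] not_empty])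
  fix A assume A: "A \<in> sets (M \<bind> P)"
  then have A': "A \<in> sets M" using sb by simp
  have one: "L2 M (\<lambda>x. 1)" by (rule L2_const) (rule finite_measure_axioms)
  have Q1: "kapp Q (\<lambda>x. 1) y = 1" if "y \<in> space M" for y by (rule mk_one[OF Q that]) auto
  have PQ1: "kapp P (kapp Q (\<lambda>x. 1)) y = 1" if "y \<in> space M" for y by (rule mk_one[OF P that Q1])
  have QPQ1: "kapp Q (kapp P (kapp Q (\<lambda>x. 1))) y = 1" if "y \<in> space M" for y by (rule mk_one[OF Q that PQ1])
  have "inner_mu M (kapp P (indicator A)) (\<lambda>x. 1) = inner_mu M (indicator A) (kapp Q (kapp P (kapp Q (\<lambda>x. 1))))"
    using rev L2_indicator[OF A'] one unfolding muQ_reversible_def by blast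
  also have "\<dots> = (\<integral>x. indicator A x \<partial>M)"
    unfolding inner_mu_def by (rule Bochner_Integration.integral_cong) (auto simp: QPQ1)
  also have "\<dots> = measure M A" using A' by simp
  finally have eq0: "(\<integral>z. kapp P (indicator A) z \<partial>M) = measure M A"
    unfolding inner_mu_def by simp
  have "(\<integral>z. kapp P (indicator A) z \<partial>M) = (\<integral>z. measure (P z) A \<partial>M)"
  proof (rule Bochner_Integration.integral_cong)
    fix z assume z: "z \<in> space M"
    have "A \<inter> space (P z) = A" using mk_sp(1)[OF P z] sets.sets_into_space[OF A'] by auto
    then show "kapp P (indicator A) z = measure (P z) A"
      using A' mk_sp(2)[OF P z] by (simp add: kapp_def)
  qed simp
  with eq0 have eq1: "(\<integral>z. measure (P z) A \<partial>M) = measure M A" by simp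
  have mm: "(\<lambda>z. measure (P z) A) \<in> borel_measurable M"
    using A' PK by (simp add: measure_def)
  have "emeasure (M \<bind> P) A = (\<integral>\<^sup>+z. emeasure (P z) A \<partial>M)"
    by (rule emeasure_bind[OF not_empty PK A'])
  also have "\<dots> = (\<integral>\<^sup>+z. ennreal (measure (P z) A) \<partial>M)"
  proof (rule nn_integral_cong)
    fix z assume "z \<in> space M"
    then interpret Pz: prob_space "P z" using mk_sp(3)[OF P] by blast
    show "emeasure (P z) A = ennreal (measure (P z) A)" by (simp add: Pz.emeasure_eq_measure)
  qed
  also have "\<dots> = ennreal (\<integral>z. measure (P z) A \<partial>M)"
  proof (rule nn_integral_eq_integral)
    show "integrable M (\<lambda>z. measure (P z) A)"
      by (rule integrable_const_bound[where B=1]) (use mm mk_sp(3)[OF P] in \<open>auto intro!: AE_I2 prob_space.prob_le_1\<close>)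
  qed auto
  also have "\<dots> = emeasure M A" using eq1 by (simp add: emeasure_eq_measure)
  finally show "emeasure (M \<bind> P) A = emeasure M A" .
qed

end

locale setting = prob_space M for M :: "'a measure" +
  fixes Q :: "'a \<Rightarrow> 'a measure"
  assumes Qk: "ikern M Q" and Qi: "isometric_involution M Q"
begin

lemma Q_L2: "L2 M f \<Longrightarrow> L2 M (kapp Q f)"
  using Qi by (simp add: isometric_involution_def)

lemma QQ: "L2 M f \<Longrightarrow> AE z in M. kapp Q (kapp Q f) z = f z"
  using Qi by (simp add: isometric_involution_def)

lemma Q_iso: "L2 M f \<Longrightarrow> L2 M g \<Longrightarrow> inner_mu M (kapp Q f) (kapp Q g) = inner_mu M f g"
  using Qi by (simp add: isometric_involution_def)

lemma Q_sa:
  assumes "L2 M f" "L2 M g"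
  shows "inner_mu M (kapp Q f) g = inner_mu M f (kapp Q g)"
proof -
  have "inner_mu M (kapp Q f) g = inner_mu M (kapp Q f) (kapp Q (kapp Q g))"
    by (rule ip_cong_AE) (use assms Q_L2 QQ[OF assms(2)] in \<open>auto simp: eq_commute\<close>)
  also have "\<dots> = inner_mu M f (kapp Q g)" by (rule Q_iso) (use assms Q_L2 in auto)
  finally show ?thesis .
qed

definition rk :: "('a \<Rightarrow> 'a measure) \<Rightarrow> bool" where
  "rk P \<longleftrightarrow> markov_kernel M P \<and> muQ_reversible M Q P"

lemma rk_ikern: "rk P \<Longrightarrow> ikern M P"
  unfolding rk_def ikern_def using rev_invariant Qk by (auto simp: ikern_def)

lemma rk_rev: "rk P \<Longrightarrow> L2 M f \<Longrightarrow> L2 M g \<Longrightarrow>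
    inner_mu M (kapp P f) g = inner_mu M f (kapp Q (kapp P (kapp Q g)))"
  unfolding rk_def muQ_reversible_def by blast

lemma P_L2: "rk P \<Longrightarrow> L2 M f \<Longrightarrow> L2 M (kapp P f)"
  using ik_L2(1)[OF rk_ikern] by blast

lemma P_sa:
  assumes P: "rk P" and h: "L2 M h" and w: "L2 M w"
  shows "inner_mu M h (kapp Q (kapp P w)) = inner_mu M w (kapp Q (kapp P h))"
proof -
  note PL = P_L2[OF P] and PI = rk_ikern[OF P]
  have "inner_mu M h (kapp Q (kapp P w)) = inner_mu M (kapp Q h) (kapp P w)"
    using Q_sa[OF h PL[OF w]] by simp
  also have "\<dots> = inner_mu M (kapp P w) (kapp Q h)" by (rule ip_sym)
  also have "\<dots> = inner_mu M w (kapp Q (kapp P (kapp Q (kapp Q h))))"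
    by (rule rk_rev[OF P w Q_L2[OF h]])
  also have "\<dots> = inner_mu M w (kapp Q (kapp P h))"
  proof (rule ip_cong_AE)
    have L1: "L2 M (kapp Q (kapp Q h))" using Q_L2 h by blast
    have a1: "AE z in M. kapp P (kapp Q (kapp Q h)) z = kapp P h z"
      by (rule ik_L2_cong[OF PI L1 h QQ[OF h]])
    show "AE x in M. kapp Q (kapp P (kapp Q (kapp Q h))) x = kapp Q (kapp P h) x"
      by (rule ik_L2_cong[OF Qk PL[OF L1] PL[OF h] a1])
    show "L2 M (kapp Q (kapp P (kapp Q (kapp Q h))))" using Q_L2 PL L1 by blast
    show "L2 M (kapp Q (kapp P h))" using Q_L2 PL h by blast
  qed (use w in auto)
  finally show ?thesis .
qed

lemma P_bound:
  assumes P: "rk P" and z: "L2 M z"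
  shows "\<bar>inner_mu M z (kapp Q (kapp P z))\<bar> \<le> inner_mu M z z"
proof -
  note PL = P_L2[OF P]
  have "inner_mu M z (kapp Q (kapp P z)) = inner_mu M (kapp Q z) (kapp P z)"
    using Q_sa[OF z PL[OF z]] by simp
  moreover have "\<bar>inner_mu M (kapp Q z) (kapp P z)\<bar> \<le> (inner_mu M (kapp Q z) (kapp Q z) + inner_mu M (kapp P z) (kapp P z)) / 2"
    by (rule ip_amgm) (use Q_L2 PL z in auto)
  moreover have "inner_mu M (kapp Q z) (kapp Q z) = inner_mu M z z" by (rule Q_iso[OF z z])
  moreover have "inner_mu M (kapp P z) (kapp P z) \<le> inner_mu M z z" by (rule ik_L2(2)[OF rk_ikern[OF P] z])
  ultimately show ?thesis by argo
qed

end

lemma offdiag_int: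
  fixes h :: "'a \<Rightarrow> real"
  assumes p1: "prob_space M1" and p2: "prob_space M2" and s1: "sets M1 = sets N" and s2: "sets M2 = sets N"
    and x: "{x} \<in> sets N" and ord: "\<forall>A\<in>sets N. measure M2 (A - {x}) \<le> measure M1 (A - {x})"
    and hm: "h \<in> borel_measurable N" and nn: "\<And>y. 0 \<le> h y" and hx: "h x = 0"
    and i1: "integrable M1 h" and i2: "integrable M2 h"
  shows "integral\<^sup>L M2 h \<le> integral\<^sup>L M1 h"
proof -
  define S where "S = space N - {x}"
  have SN: "S \<in> sets N" unfolding S_def using x by auto
  have sp1: "space M1 = space N" by (rule sets_eq_imp_space_eq[OF s1])
  have sp2: "space M2 = space N" by (rule sets_eq_imp_space_eq[OF s2])
  have SA: "S \<inter> A = A - {x}" if "A \<in> sets N" for A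
    unfolding S_def using sets.sets_into_space[OF that] by auto
  have le: "density M2 (indicator S) \<le> density M1 (indicator S)"
  proof -
    have "emeasure (density M2 (indicator S)) A \<le> emeasure (density M1 (indicator S)) A" for A
    proof (cases "A \<in> sets N")
      case True
      interpret P1: prob_space M1 by fact
      interpret P2: prob_space M2 by fact
      have "emeasure (density M2 (indicator S)) A = emeasure M2 (A - {x})"
        using emeasure_restricted[of S M2 A] SN True s2 SA[OF True] by simp
      also have "\<dots> = ennreal (measure M2 (A - {x}))" by (simp add: P2.emeasure_eq_measure)
      also have "\<dots> \<le> ennreal (measure M1 (A - {x}))" using ord True by (simp add: ennreal_leI)
      also have "\<dots> = emeasure M1 (A - {x})" by (simp add: P1.emeasure_eq_measure)
      also have "\<dots> = emeasure (density M1 (indicator S)) A"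
        using emeasure_restricted[of S M1 A] SN True s1 SA[OF True] by simp
      finally show ?thesis .
    next
      case False
      then show ?thesis using s1 s2 by (simp add: emeasure_notin_sets)
    qed
    then show ?thesis
      using s1 s2 sp1 sp2 by (simp add: le_measure_iff le_fun_def)
  qed
  have hm1: "h \<in> borel_measurable M1" and hm2: "h \<in> borel_measurable M2"
    using hm measurable_cong_sets[OF s1 refl] measurable_cong_sets[OF s2 refl] by auto
  have dens: "(\<integral>\<^sup>+y. ennreal (h y) \<partial>density Mi (indicator S)) = (\<integral>\<^sup>+y. ennreal (h y) \<partial>Mi)"
    if si: "sets Mi = sets N" for Mi
  proof -
    have "(\<integral>\<^sup>+y. ennreal (h y) \<partial>density Mi (indicator S)) = (\<integral>\<^sup>+y. indicator S y * ennreal (h y) \<partial>Mi)"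
      by (rule nn_integral_density) (use hm SN si measurable_cong_sets[OF si refl] in auto)
    also have "\<dots> = (\<integral>\<^sup>+y. ennreal (h y) \<partial>Mi)"
    proof (rule nn_integral_cong)
      fix y assume "y \<in> space Mi"
      then have "y \<in> space N" using si sets_eq_imp_space_eq by blast
      then show "indicator S y * ennreal (h y) = ennreal (h y)"
        unfolding S_def using hx by (cases "y = x") auto
    qed
    finally show ?thesis .
  qed
  have "(\<integral>\<^sup>+y. ennreal (h y) \<partial>M2) \<le> (\<integral>\<^sup>+y. ennreal (h y) \<partial>M1)"
    using nn_integral_mono_measure[OF _ le, of "\<lambda>y. ennreal (h y)"] dens[OF s1] dens[OF s2] s1 s2 by simp
  moreover have "(\<integral>\<^sup>+y. ennreal (h y) \<partial>M1) < \<infinity>"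
    using i1 nn unfolding integrable_iff_bounded by simp
  ultimately have "enn2real (\<integral>\<^sup>+y. ennreal (h y) \<partial>M2) \<le> enn2real (\<integral>\<^sup>+y. ennreal (h y) \<partial>M1)"
    by (simp add: enn2real_mono)
  then show ?thesis
    using integral_eq_nn_integral[OF hm1] integral_eq_nn_integral[OF hm2] nn by simp
qed

context prob_space
begin

lemma kcomp_ikern:
  assumes K1: "ikern M K1" and K2: "ikern M K2"
  shows "ikern M (kcomp K1 K2)"
proof -
  have m1: "K1 \<in> measurable M (subprob_algebra M)" and m2: "K2 \<in> measurable M (subprob_algebra M)"
    using ik_meas K1 K2 by auto
  have m: "kcomp K1 K2 \<in> measurable M (subprob_algebra M)"
    unfolding kcomp_def by (rule measurable_bind2[OF m1 m2])
  have p: "prob_space (kcomp K1 K2 z)" if z: "z \<in> space M" for z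
  proof -
    interpret P1: prob_space "K1 z" using ik_sp(3)[OF K1 z] .
    have m2': "K2 \<in> measurable (K1 z) (subprob_algebra M)"
      using m2 measurable_cong_sets[OF ik_sp(2)[OF K1 z] refl] by auto
    show ?thesis unfolding kcomp_def
      by (rule P1.prob_space_bind[OF _ m2']) (use ik_sp(3)[OF K2] ik_sp(1)[OF K1 z] in \<open>auto intro!: AE_I2\<close>)
  qed
  have "M \<bind> kcomp K1 K2 = (M \<bind> K1) \<bind> K2"
    unfolding kcomp_def by (rule bind_assoc[OF m1 m2, symmetric])
  also have "\<dots> = M" using ik_bind[OF K1] ik_bind[OF K2] by simp
  finally show ?thesis using m p by (simp add: ikern_def markov_kernel_def)
qed

lemma kcomp_kapp:
  assumes K1: "ikern M K1" and K2: "ikern M K2" and g: "L2 M g"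
  shows "AE z in M. kapp (kcomp K1 K2) g z = kapp K1 (kapp K2 g) z"
proof -
  have "AE z in M. integrable (kcomp K1 K2 z) g"
    by (rule ik_int(1)[OF kcomp_ikern[OF K1 K2] L2_integrable[OF g]])
  then show ?thesis
  proof (rule AE_mp, intro AE_I2 impI)
    fix z assume z: "z \<in> space M" and i: "integrable (kcomp K1 K2 z) g"
    have m2': "K2 \<in> measurable (K1 z) (subprob_algebra M)"
      using ik_meas[OF K2] measurable_cong_sets[OF ik_sp(2)[OF K1 z] refl] by auto
    have ne: "space (K1 z) \<noteq> {}" using ik_sp(1)[OF K1 z] not_empty by simp
    have i': "integrable (K1 z \<bind> K2) g" using i by (simp add: kcomp_def)
    show "kapp (kcomp K1 K2) g z = kapp K1 (kapp K2 g) z"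
      using bind_integral(3)[OF m2' ne i'] by (simp add: kapp_def kcomp_def)
  qed
qed

lemma dirichlet:
  assumes K1: "ikern M K1" and K2: "ikern M K2"
    and sing: "\<forall>z\<in>space M. {z} \<in> sets M"
    and ord: "\<forall>z\<in>space M. \<forall>A\<in>sets M. measure (K1 z) (A - {z}) \<ge> measure (K2 z) (A - {z})"
    and g: "L2 M g"
  shows "inner_mu M g (kapp K1 g) \<le> inner_mu M g (kapp K2 g)"
proof -
  have gi: "integrable M g" by (rule L2_integrable[OF g])
  have g2: "integrable M (\<lambda>x. (g x)\<^sup>2)" using g by (simp add: L2_def)
  have gm: "g \<in> borel_measurable M" using g by (simp add: L2_def)
  define E where "E K z = kapp K (\<lambda>x. (g x)\<^sup>2) z - 2 * (g z * kapp K g z)" for K z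
  have expand: "(\<integral>y. (g y - g z)\<^sup>2 \<partial>K z) = E K z + (g z)\<^sup>2"
    if K: "ikern M K" and z: "z \<in> space M" and i1: "integrable (K z) g" and i2: "integrable (K z) (\<lambda>x. (g x)\<^sup>2)" for K z
  proof -
    interpret Pz: prob_space "K z" using ik_sp(3)[OF K z] .
    have "(\<lambda>y. (g y - g z)\<^sup>2) = (\<lambda>y. (g y)\<^sup>2 - 2 * g z * g y + (g z)\<^sup>2)"
      by (simp add: power2_diff algebra_simps)
    then have "(\<integral>y. (g y - g z)\<^sup>2 \<partial>K z) = (\<integral>y. (g y)\<^sup>2 - 2 * g z * g y + (g z)\<^sup>2 \<partial>K z)" by simp
    also have "\<dots> = (\<integral>y. (g y)\<^sup>2 \<partial>K z) - 2 * g z * (\<integral>y. g y \<partial>K z) + (g z)\<^sup>2"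
      using i1 i2 by (simp add: Pz.prob_space)
    finally show ?thesis by (simp add: E_def kapp_def)
  qed
  have intsq: "integrable (K z) (\<lambda>y. (g y - g z)\<^sup>2)"
    if K: "ikern M K" and z: "z \<in> space M" and i1: "integrable (K z) g" and i2: "integrable (K z) (\<lambda>x. (g x)\<^sup>2)" for K z
  proof -
    interpret Pz: prob_space "K z" using ik_sp(3)[OF K z] .
    have "(\<lambda>y. (g y - g z)\<^sup>2) = (\<lambda>y. (g y)\<^sup>2 - 2 * g z * g y + (g z)\<^sup>2)"
      by (simp add: power2_diff algebra_simps)
    then show ?thesis using i1 i2 by simp
  qed
  have AE1: "AE z in M. integrable (K1 z) g \<and> integrable (K1 z) (\<lambda>x. (g x)\<^sup>2)"
    using ik_int(1)[OF K1 gi] ik_int(1)[OF K1 g2] by eventually_elim auto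
  have AE2: "AE z in M. integrable (K2 z) g \<and> integrable (K2 z) (\<lambda>x. (g x)\<^sup>2)"
    using ik_int(1)[OF K2 gi] ik_int(1)[OF K2 g2] by eventually_elim auto
  have AE12: "AE z in M. (integrable (K1 z) g \<and> integrable (K1 z) (\<lambda>x. (g x)\<^sup>2)) \<and>
      (integrable (K2 z) g \<and> integrable (K2 z) (\<lambda>x. (g x)\<^sup>2))"
    using AE1 AE2 by eventually_elim auto
  have pw: "AE z in M. E K2 z \<le> E K1 z"
    using AE12
  proof (rule AE_mp, intro AE_I2 impI)
    fix z assume zs: "z \<in> space M" and elim: "(integrable (K1 z) g \<and> integrable (K1 z) (\<lambda>x. (g x)\<^sup>2)) \<and>
      (integrable (K2 z) g \<and> integrable (K2 z) (\<lambda>x. (g x)\<^sup>2))"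
    have "(\<integral>y. (g y - g z)\<^sup>2 \<partial>K2 z) \<le> (\<integral>y. (g y - g z)\<^sup>2 \<partial>K1 z)"
    proof (rule offdiag_int[where N=M and x=z])
      show "prob_space (K1 z)" "prob_space (K2 z)" using ik_sp(3) K1 K2 zs by auto
      show "sets (K1 z) = sets M" "sets (K2 z) = sets M" using ik_sp(2) K1 K2 zs by auto
      show "{z} \<in> sets M" using sing zs by auto
      show "\<forall>A\<in>sets M. measure (K2 z) (A - {z}) \<le> measure (K1 z) (A - {z})" using ord zs by auto
      show "(\<lambda>y. (g y - g z)\<^sup>2) \<in> borel_measurable M" using gm by measurable
      show "integrable (K1 z) (\<lambda>y. (g y - g z)\<^sup>2)" using intsq[OF K1 zs] elim by auto
      show "integrable (K2 z) (\<lambda>y. (g y - g z)\<^sup>2)" using intsq[OF K2 zs] elim by auto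
    qed auto
    then show "E K2 z \<le> E K1 z" using expand[OF K1 zs] expand[OF K2 zs] elim by auto
  qed
  have intE: "integrable M (E K)" if K: "ikern M K" for K
  proof -
    have "integrable M (\<lambda>z. g z * kapp K g z)" by (rule L2_prod_int[OF g ik_L2(1)[OF K g]])
    then show ?thesis unfolding E_def using ik_int(2)[OF K g2] by simp
  qed
  have intEv: "integral\<^sup>L M (E K) = integral\<^sup>L M (\<lambda>x. (g x)\<^sup>2) - 2 * inner_mu M g (kapp K g)"
    if K: "ikern M K" for K
  proof -
    have "integrable M (\<lambda>z. g z * kapp K g z)" by (rule L2_prod_int[OF g ik_L2(1)[OF K g]])
    then show ?thesis unfolding E_def inner_mu_def using ik_int(2,3)[OF K g2] by simp
  qed
  have "integral\<^sup>L M (E K2) \<le> integral\<^sup>L M (E K1)"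
    by (rule integral_mono_AE[OF intE[OF K2] intE[OF K1] pw])
  then show ?thesis using intEv[OF K1] intEv[OF K2] by simp
qed

end

lemma weighted_cs:
  fixes c a :: "nat \<Rightarrow> real"
  assumes "\<And>k. 0 \<le> c k"
  shows "(\<Sum>k\<in>I. c k * a k)\<^sup>2 \<le> (\<Sum>k\<in>I. c k) * (\<Sum>k\<in>I. c k * (a k)\<^sup>2)"
proof -
  have "(\<Sum>k\<in>I. sqrt (c k) * (sqrt (c k) * a k))\<^sup>2 \<le> (\<Sum>k\<in>I. (sqrt (c k))\<^sup>2) * (\<Sum>k\<in>I. (sqrt (c k) * a k)\<^sup>2)"
    by (rule Cauchy_Schwarz_ineq_sum)
  moreover have "sqrt (c k) * (sqrt (c k) * a k) = c k * a k" for k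
    using assms[of k] by (simp add: mult.assoc[symmetric])
  moreover have "(sqrt (c k))\<^sup>2 = c k" for k using assms[of k] by simp
  moreover have "(sqrt (c k) * a k)\<^sup>2 = c k * (a k)\<^sup>2" for k using assms[of k] by (simp add: power_mult_distrib)
  ultimately show ?thesis by simp
qed

lemma ip_sum_right:
  assumes "L2 M f" "\<And>k. L2 M (g k)"
  shows "inner_mu M f (\<lambda>x. \<Sum>k<(N::nat). c k * g k x) = (\<Sum>k<N. c k * inner_mu M f (g k))"
proof (induction N)
  case 0
  then show ?case by (simp add: inner_mu_def)
next
  case (Suc N)
  have L: "L2 M (\<lambda>x. \<Sum>k<N. c k * g k x)" by (rule L2_sum) (rule L2_scale[OF assms(2)])
  have "inner_mu M f (\<lambda>x. \<Sum>k<Suc N. c k * g k x) = inner_mu M f (\<lambda>x. (\<Sum>k<N. c k * g k x) + c N * g N x)"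
    by simp
  also have "\<dots> = inner_mu M f (\<lambda>x. \<Sum>k<N. c k * g k x) + inner_mu M f (\<lambda>x. c N * g N x)"
    by (rule ip_add_right[OF assms(1) L L2_scale[OF assms(2)]])
  also have "\<dots> = (\<Sum>k<Suc N. c k * inner_mu M f (g k))"
    using Suc by (simp add: ip_scale_right)
  finally show ?case .
qed

lemma ip_add_sq:
  assumes "L2 M f" "L2 M g"
  shows "inner_mu M (\<lambda>x. f x + g x) (\<lambda>x. f x + g x) \<le> 2 * inner_mu M f f + 2 * inner_mu M g g"
  using ip_diff_sq[OF assms(1) L2_uminus[OF assms(2)]]
  by (simp add: ip_uminus_left ip_uminus_right)

locale core = setting +
  fixes lam s :: real
  assumes lam0: "0 \<le> lam" and lam1: "lam < 1" and s2: "s * s = 1"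
begin

abbreviation ip where "ip \<equiv> inner_mu M"

definition vv :: "('a \<Rightarrow> 'a measure) \<Rightarrow> ('a \<Rightarrow> real) \<Rightarrow> nat \<Rightarrow> 'a \<Rightarrow> real" where
  "vv P f k = (kapp P ^^ k) f"

definition uu :: "('a \<Rightarrow> 'a measure) \<Rightarrow> ('a \<Rightarrow> real) \<Rightarrow> nat \<Rightarrow> 'a \<Rightarrow> real" where
  "uu P f N = (\<lambda>x. \<Sum>k<N. lam ^ k * vv P f k x)"

lemma vv_Suc: "vv P f (Suc k) = kapp P (vv P f k)"
  by (simp add: vv_def)

lemma vv_0: "vv P f 0 = f"
  by (simp add: vv_def)

lemma vv_L2:
  assumes P: "rk P" and f: "L2 M f"
  shows "L2 M (vv P f k) \<and> ip (vv P f k) (vv P f k) \<le> ip f f"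
proof (induction k)
  case 0
  then show ?case using f by (simp add: vv_0)
next
  case (Suc k)
  then show ?case
    using ik_L2[OF rk_ikern[OF P], of "vv P f k"] by (simp add: vv_Suc)
qed

lemma uu_L2:
  assumes P: "rk P" and f: "L2 M f"
  shows "L2 M (uu P f N)"
  unfolding uu_def by (rule L2_sum) (rule L2_scale, use vv_L2[OF P f] in blast)

lemma uu_Suc: "uu P f (Suc N) = (\<lambda>x. uu P f N x + lam ^ N * vv P f N x)"
  by (simp add: uu_def)

lemma kapp_zero: "kapp K (\<lambda>x. 0) = (\<lambda>z. 0)"
  by (simp add: kapp_def)

lemma uu_resid:
  assumes P: "rk P" and f: "L2 M f"
  shows "AE x in M. uu P f N x - lam * kapp P (uu P f N) x = f x - lam ^ N * vv P f N x"
proof (induction N)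
  case 0
  then show ?case by (simp add: uu_def kapp_zero vv_0)
next
  case (Suc N)
  note PI = rk_ikern[OF P]
  have L1: "L2 M (uu P f N)" by (rule uu_L2[OF P f])
  have L2': "L2 M (\<lambda>x. lam ^ N * vv P f N x)" by (rule L2_scale) (use vv_L2[OF P f] in blast)
  have a: "AE z in M. kapp P (uu P f (Suc N)) z = kapp P (uu P f N) z + kapp P (\<lambda>x. lam ^ N * vv P f N x) z"
    unfolding uu_Suc by (rule ik_L2_add[OF PI L1 L2'])
  show ?case using Suc a
    by eventually_elim (simp add: uu_Suc ik_scale vv_Suc algebra_simps)
qed

lemma uu_norm:
  assumes P: "rk P" and f: "L2 M f"
  shows "ip (uu P f N) (uu P f N) \<le> ip f f / (1 - lam)\<^sup>2"
proof -
  define G where "G = (\<Sum>k<N. lam ^ k)"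
  have G0: "0 \<le> G" unfolding G_def using lam0 by (simp add: sum_nonneg)
  have G1: "G \<le> 1 / (1 - lam)"
  proof -
    have "G = (1 - lam ^ N) / (1 - lam)" unfolding G_def using lam1 by (simp add: sum_gp_strict)
    also have "\<dots> \<le> 1 / (1 - lam)" using lam0 lam1 by (simp add: divide_right_mono)
    finally show ?thesis .
  qed
  have Lv: "\<And>k. L2 M (vv P f k)" using vv_L2[OF P f] by blast
  have iv: "\<And>k. integrable M (\<lambda>x. (vv P f k x)\<^sup>2)" using Lv by (simp add: L2_def)
  have "ip (uu P f N) (uu P f N) = (\<integral>x. (\<Sum>k<N. lam ^ k * vv P f k x)\<^sup>2 \<partial>M)"
    by (simp add: inner_mu_def uu_def power2_eq_square)
  also have "\<dots> \<le> (\<integral>x. G * (\<Sum>k<N. lam ^ k * (vv P f k x)\<^sup>2) \<partial>M)"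
  proof (rule integral_mono)
    show "integrable M (\<lambda>x. (\<Sum>k<N. lam ^ k * vv P f k x)\<^sup>2)"
      using uu_L2[OF P f, of N] by (simp add: L2_def uu_def)
    show "integrable M (\<lambda>x. G * (\<Sum>k<N. lam ^ k * (vv P f k x)\<^sup>2))" using iv by simp
    fix x show "(\<Sum>k<N. lam ^ k * vv P f k x)\<^sup>2 \<le> G * (\<Sum>k<N. lam ^ k * (vv P f k x)\<^sup>2)"
      unfolding G_def by (rule weighted_cs) (use lam0 in simp)
  qed
  also have "\<dots> = G * (\<Sum>k<N. lam ^ k * ip (vv P f k) (vv P f k))"
    using iv by (simp add: inner_mu_def power2_eq_square)
  also have "\<dots> \<le> G * (\<Sum>k<N. lam ^ k * ip f f)"
    by (intro mult_left_mono sum_mono G0) (use vv_L2[OF P f] lam0 in \<open>auto intro: mult_left_mono\<close>)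
  also have "\<dots> = G * G * ip f f"
  proof -
    have "(\<Sum>k<N. lam ^ k * ip f f) = G * ip f f" unfolding G_def by (rule sum_distrib_right[symmetric])
    then show ?thesis by simp
  qed
  also have "\<dots> \<le> (1 / (1 - lam)) * (1 / (1 - lam)) * ip f f"
    by (intro mult_right_mono mult_mono G1 G0 ip_nonneg) (use lam1 in auto)
  also have "\<dots> = ip f f / (1 - lam)\<^sup>2" by (simp add: power2_eq_square)
  finally show ?thesis .
qed

lemma ip_f_uu:
  assumes P: "rk P" and f: "L2 M f"
  shows "ip f (uu P f N) = (\<Sum>k<N. lam ^ k * ip f (vv P f k))"
  unfolding uu_def by (rule ip_sum_right[OF f]) (use vv_L2[OF P f] in blast)

end

locale core2 = core +
  fixes f :: "'a \<Rightarrow> real"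
  assumes fL2: "L2 M f" and fQ: "AE x in M. kapp Q f x = s * f x"
begin

lemma abs_s: "\<bar>s\<bar> = 1"
proof -
  have "s = 1 \<or> s = -1" using s2 square_eq_1_iff by blast
  then show ?thesis by auto
qed

definition bf :: "('a \<Rightarrow> 'a measure) \<Rightarrow> ('a \<Rightarrow> real) \<Rightarrow> ('a \<Rightarrow> real) \<Rightarrow> real" where
  "bf P h w = s * (ip h (kapp Q w) - lam * ip h (kapp Q (kapp P w)))"

lemma sL2: "L2 M g \<Longrightarrow> L2 M (\<lambda>x. c * g x)" by (rule L2_scale)

lemma bf_resid:
  assumes P: "rk P" and h: "L2 M h"
  shows "bf P h (uu P f N) = ip h f - s * lam ^ N * ip (kapp Q h) (vv P f N)"
proof -
  define u where "u = uu P f N"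
  have Lu: "L2 M u" unfolding u_def by (rule uu_L2[OF P fL2])
  have LPu: "L2 M (kapp P u)" by (rule P_L2[OF P Lu])
  have LQh: "L2 M (kapp Q h)" by (rule Q_L2[OF h])
  have Lv: "L2 M (vv P f N)" using vv_L2[OF P fL2] by blast
  have "ip h (kapp Q u) - lam * ip h (kapp Q (kapp P u)) = ip (kapp Q h) u - lam * ip (kapp Q h) (kapp P u)"
    using Q_sa[OF h Lu] Q_sa[OF h LPu] by simp
  also have "\<dots> = ip (kapp Q h) (\<lambda>x. u x - lam * kapp P u x)"
    by (simp add: ip_diff_right[OF LQh Lu sL2[OF LPu]] ip_scale_right)
  also have "\<dots> = ip (kapp Q h) (\<lambda>x. f x - lam ^ N * vv P f N x)"
    by (rule ip_cong_AE[OF LQh L2_diff[OF Lu sL2[OF LPu]] LQh L2_diff[OF fL2 sL2[OF Lv]]])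
       (use uu_resid[OF P fL2, of N] in \<open>auto simp: u_def\<close>)
  also have "\<dots> = ip (kapp Q h) f - lam ^ N * ip (kapp Q h) (vv P f N)"
    by (simp add: ip_diff_right[OF LQh fL2 sL2[OF Lv]] ip_scale_right)
  also have "ip (kapp Q h) f = ip h (kapp Q f)" by (rule Q_sa[OF h fL2])
  also have "\<dots> = ip h (\<lambda>x. s * f x)"
    by (rule ip_cong_AE[OF h Q_L2[OF fL2] h sL2[OF fL2]]) (use fQ in auto)
  also have "\<dots> = s * ip h f" by (rule ip_scale_right)
  finally have "ip h (kapp Q u) - lam * ip h (kapp Q (kapp P u)) = s * ip h f - lam ^ N * ip (kapp Q h) (vv P f N)" .
  then have "bf P h u = s * (s * ip h f - lam ^ N * ip (kapp Q h) (vv P f N))"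
    by (simp add: bf_def)
  also have "\<dots> = (s * s) * ip h f - s * lam ^ N * ip (kapp Q h) (vv P f N)" by (simp add: algebra_simps)
  finally show ?thesis using s2 by (simp add: u_def)
qed

lemma bf_add_left:
  assumes P: "rk P" and "L2 M h1" "L2 M h2" "L2 M w"
  shows "bf P (\<lambda>x. h1 x + h2 x) w = bf P h1 w + bf P h2 w"
proof -
  have a: "L2 M (kapp Q w)" "L2 M (kapp Q (kapp P w))" using assms Q_L2 P_L2 by auto
  show ?thesis unfolding bf_def
    using ip_add_left[OF a(1) assms(2,3)] ip_add_left[OF a(2) assms(2,3)] by (simp add: algebra_simps)
qed

lemma bf_sym:
  assumes P: "rk P" and h: "L2 M h" and w: "L2 M w"
  shows "bf P h w = bf P w h"
proof -
  have "ip h (kapp Q w) = ip w (kapp Q h)"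
    using Q_sa[OF h w] ip_sym[of M "kapp Q h" w] by simp
  moreover have "ip h (kapp Q (kapp P w)) = ip w (kapp Q (kapp P h))" by (rule P_sa[OF P h w])
  ultimately show ?thesis by (simp add: bf_def)
qed

lemma bf_expand:
  assumes P: "rk P" and u: "L2 M u" and z: "L2 M z"
  shows "bf P (\<lambda>x. u x + z x) (\<lambda>x. u x + z x) = bf P u u + 2 * bf P z u + bf P z z"
proof -
  have uz: "L2 M (\<lambda>x. u x + z x)" by (rule L2_add[OF u z])
  have "bf P (\<lambda>x. u x + z x) (\<lambda>x. u x + z x) = bf P u (\<lambda>x. u x + z x) + bf P z (\<lambda>x. u x + z x)"
    by (rule bf_add_left[OF P u z uz])
  also have "bf P u (\<lambda>x. u x + z x) = bf P u u + bf P z u"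
    using bf_sym[OF P u uz] bf_add_left[OF P u z u] by simp
  also have "bf P z (\<lambda>x. u x + z x) = bf P u z + bf P z z"
    using bf_sym[OF P z uz] bf_add_left[OF P u z z] by simp
  also have "bf P u z = bf P z u" by (rule bf_sym[OF P u z])
  finally show ?thesis by simp
qed

lemma ip_Qeig:
  assumes z: "L2 M z" and Qz: "AE x in M. kapp Q z x = c * z x"
  shows "ip z (kapp Q z) = c * ip z z"
proof -
  have "ip z (kapp Q z) = ip z (\<lambda>x. c * z x)"
    by (rule ip_cong_AE[OF z Q_L2[OF z] z sL2[OF z]]) (use Qz in auto)
  then show ?thesis by (simp add: ip_scale_right)
qed

lemma bf_pos:
  assumes P: "rk P" and z: "L2 M z" and Qz: "AE x in M. kapp Q z x = s * z x"
  shows "0 \<le> bf P z z"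
proof -
  define X where "X = ip z (kapp Q (kapp P z))"
  have X: "\<bar>X\<bar> \<le> ip z z" unfolding X_def by (rule P_bound[OF P z])
  have "bf P z z = (s * s) * ip z z - s * lam * X"
    unfolding bf_def X_def[symmetric] ip_Qeig[OF z Qz] by (simp add: algebra_simps)
  also have "\<dots> = ip z z - s * lam * X" using s2 by simp
  finally have e: "bf P z z = ip z z - s * lam * X" .
  have "\<bar>s * lam * X\<bar> = lam * \<bar>X\<bar>" using abs_s lam0 by (simp add: abs_mult)
  also have "\<dots> \<le> 1 * ip z z" using X lam0 lam1 ip_nonneg[of M z]
    by (intro mult_mono) auto
  finally show ?thesis using e by (simp add: abs_le_iff)
qed

lemma bf_neg:
  assumes P: "rk P" and z: "L2 M z" and Qz: "AE x in M. kapp Q z x = - s * z x"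
  shows "bf P z z \<le> 0"
proof -
  define X where "X = ip z (kapp Q (kapp P z))"
  have X: "\<bar>X\<bar> \<le> ip z z" unfolding X_def by (rule P_bound[OF P z])
  have "bf P z z = - (s * s) * ip z z - s * lam * X"
    unfolding bf_def X_def[symmetric] ip_Qeig[OF z Qz] by (simp add: algebra_simps)
  also have "\<dots> = - ip z z - s * lam * X" using s2 by simp
  finally have e: "bf P z z = - ip z z - s * lam * X" .
  have "\<bar>s * lam * X\<bar> = lam * \<bar>X\<bar>" using abs_s lam0 by (simp add: abs_mult)
  also have "\<dots> \<le> 1 * ip z z" using X lam0 lam1 ip_nonneg[of M z]
    by (intro mult_mono) auto
  finally show ?thesis using e by (simp add: abs_le_iff)
qed

lemma f_orth:
  assumes z: "L2 M z" and Qz: "AE x in M. kapp Q z x = - s * z x"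
  shows "ip z f = 0"
proof -
  have "ip (kapp Q z) f = ip (\<lambda>x. - s * z x) f"
    by (rule ip_cong_AE[OF Q_L2[OF z] fL2 sL2[OF z] fL2]) (use Qz in auto)
  then have a: "ip (kapp Q z) f = - s * ip z f" by (simp add: ip_scale_left ip_uminus_left)
  have "ip (kapp Q z) f = ip z (kapp Q f)" by (rule Q_sa[OF z fL2])
  also have "\<dots> = ip z (\<lambda>x. s * f x)"
    by (rule ip_cong_AE[OF z Q_L2[OF fL2] z sL2[OF fL2]]) (use fQ in auto)
  finally have b: "ip (kapp Q z) f = s * ip z f" by (simp add: ip_scale_right)
  from a b have "2 * s * ip z f = 0" by simp
  moreover have "s \<noteq> 0" using s2 by auto
  ultimately show ?thesis by simp
qed

definition dec :: "real \<Rightarrow> ('a \<Rightarrow> real) \<Rightarrow> 'a \<Rightarrow> real" where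
  "dec c w = (\<lambda>x. (1/2) * (w x + c * kapp Q w x))"

lemma dec_L2: "L2 M w \<Longrightarrow> L2 M (dec c w)"
  unfolding dec_def by (intro L2_scale L2_add sL2 Q_L2)

lemma dec_Q:
  assumes w: "L2 M w" and c: "c * c = 1"
  shows "AE x in M. kapp Q (dec c w) x = c * dec c w x"
proof -
  have a: "AE z in M. kapp Q (\<lambda>x. w x + c * kapp Q w x) z = kapp Q w z + kapp Q (\<lambda>x. c * kapp Q w x) z"
    by (rule ik_L2_add[OF Qk w sL2[OF Q_L2[OF w]]])
  have "kapp Q (dec c w) = (\<lambda>z. (1/2) * kapp Q (\<lambda>x. w x + c * kapp Q w x) z)"
    unfolding dec_def by (rule ik_scale)
  then show ?thesis using a QQ[OF w]
  proof (simp only:)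
    assume "AE z in M. kapp Q (\<lambda>x. w x + c * kapp Q w x) z = kapp Q w z + kapp Q (\<lambda>x. c * kapp Q w x) z"
      "AE z in M. kapp Q (kapp Q w) z = w z"
    then show "AE x in M. 1 / 2 * kapp Q (\<lambda>x. w x + c * kapp Q w x) x = c * dec c w x"
    proof eventually_elim
      case (elim x)
      have "1 / 2 * kapp Q (\<lambda>x. w x + c * kapp Q w x) x = 1/2 * (kapp Q w x + c * w x)"
        using elim by (simp add: ik_scale)
      also have "\<dots> = 1/2 * (c * w x + (c * c) * kapp Q w x)" using c by simp
      also have "\<dots> = c * dec c w x" unfolding dec_def
        by (simp add: algebra_simps)
      finally show ?case .
    qed
  qed
qed

lemma dec_norm:
  assumes w: "L2 M w" and c: "c * c = 1"
  shows "ip (dec c w) (dec c w) \<le> ip w w"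
proof -
  have LcQ: "L2 M (\<lambda>x. c * kapp Q w x)" by (rule sL2[OF Q_L2[OF w]])
  have "ip (dec c w) (dec c w) = (1/2) * (1/2) * ip (\<lambda>x. w x + c * kapp Q w x) (\<lambda>x. w x + c * kapp Q w x)"
    unfolding dec_def by (simp only: ip_scale_left ip_scale_right mult.assoc)
  also have "\<dots> \<le> (1/2) * (1/2) * (2 * ip w w + 2 * ip (\<lambda>x. c * kapp Q w x) (\<lambda>x. c * kapp Q w x))"
    by (intro mult_left_mono ip_add_sq[OF w LcQ]) auto
  also have "ip (\<lambda>x. c * kapp Q w x) (\<lambda>x. c * kapp Q w x) = (c * c) * ip (kapp Q w) (kapp Q w)"
    by (simp add: ip_scale_left ip_scale_right)
  also have "\<dots> = ip w w" using c Q_iso[OF w w] by simp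
  finally show ?thesis by simp
qed

lemma dec_split: "w x = dec s w x + dec (- s) w x"
  by (simp add: dec_def algebra_simps)

end

context core2
begin

lemma cross_bound:
  assumes P: "rk P" and phi: "L2 M phi"
  shows "\<bar>ip (kapp Q phi) (vv P f N)\<bar> \<le> (ip phi phi + ip f f) / 2"
proof -
  have Lv: "L2 M (vv P f N)" and nv: "ip (vv P f N) (vv P f N) \<le> ip f f" using vv_L2[OF P fL2] by auto
  have "\<bar>ip (kapp Q phi) (vv P f N)\<bar> \<le> (ip (kapp Q phi) (kapp Q phi) + ip (vv P f N) (vv P f N)) / 2"
    by (rule ip_amgm[OF Q_L2[OF phi] Lv])
  also have "ip (kapp Q phi) (kapp Q phi) = ip phi phi" by (rule Q_iso[OF phi phi])
  finally show ?thesis using nv by argo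
qed

lemma core_ineq:
  assumes Pa: "rk Pa" and Pb: "rk Pb"
    and H: "\<And>m. L2 M m \<Longrightarrow> s * ip m (kapp Q (kapp Pa m)) \<le> s * ip m (kapp Q (kapp Pb m))"
  shows "ip f (uu Pa f N) \<le> ip f (uu Pb f N) + lam ^ N * (9 * (ip f f / (1 - lam)\<^sup>2) + 3 * ip f f)"
proof -
  define F where "F = ip f f"
  define B where "B = ip f f / (1 - lam)\<^sup>2"
  define u where "u = uu Pa f N"
  define w where "w = uu Pb f N"
  define va where "va = vv Pa f N"
  define vb where "vb = vv Pb f N"
  define m where "m = (\<lambda>x. dec s u x + dec (- s) w x)"
  define z where "z = (\<lambda>x. dec (- s) w x - dec (- s) u x)"
  define z' where "z' = (\<lambda>x. dec s u x - dec s w x)"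
  have ms: "(- s) * (- s) = 1" using s2 by simp
  have Lu: "L2 M u" unfolding u_def by (rule uu_L2[OF Pa fL2])
  have Lw: "L2 M w" unfolding w_def by (rule uu_L2[OF Pb fL2])
  have Lz: "L2 M z" unfolding z_def by (intro L2_diff dec_L2 Lu Lw)
  have Lz': "L2 M z'" unfolding z'_def by (intro L2_diff dec_L2 Lu Lw)
  have Lm: "L2 M m" unfolding m_def by (intro L2_add dec_L2 Lu Lw)
  have m1: "m = (\<lambda>x. u x + z x)"
    unfolding m_def z_def using dec_split[of u] by (auto simp: algebra_simps)
  have m2: "m = (\<lambda>x. w x + z' x)"
    unfolding m_def z'_def using dec_split[of w] by (auto simp: algebra_simps)
  have Qz: "AE x in M. kapp Q z x = - s * z x"
    using ik_L2_diff[OF Qk dec_L2[OF Lw] dec_L2[OF Lu], of "- s" "- s"] dec_Q[OF Lw ms] dec_Q[OF Lu ms]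
    by eventually_elim (simp add: z_def algebra_simps)
  have Qz': "AE x in M. kapp Q z' x = s * z' x"
    using ik_L2_diff[OF Qk dec_L2[OF Lu] dec_L2[OF Lw], of s s] dec_Q[OF Lu s2] dec_Q[OF Lw s2]
    by eventually_elim (simp add: z'_def algebra_simps)
  have fz: "ip f z = 0" using f_orth[OF Lz Qz] ip_sym[of M f z] by simp
  have nu: "ip u u \<le> B" unfolding u_def B_def by (rule uu_norm[OF Pa fL2])
  have nw: "ip w w \<le> B" unfolding w_def B_def by (rule uu_norm[OF Pb fL2])
  have nz: "ip z z \<le> 4 * B"
  proof -
    have "ip z z \<le> 2 * ip (dec (- s) w) (dec (- s) w) + 2 * ip (dec (- s) u) (dec (- s) u)"
      unfolding z_def by (rule ip_diff_sq[OF dec_L2[OF Lw] dec_L2[OF Lu]])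
    also have "\<dots> \<le> 2 * B + 2 * B"
      using dec_norm[OF Lw ms] dec_norm[OF Lu ms] nu nw by argo
    finally show ?thesis by simp
  qed
  have nz': "ip z' z' \<le> 4 * B"
  proof -
    have "ip z' z' \<le> 2 * ip (dec s u) (dec s u) + 2 * ip (dec s w) (dec s w)"
      unfolding z'_def by (rule ip_diff_sq[OF dec_L2[OF Lu] dec_L2[OF Lw]])
    also have "\<dots> \<le> 2 * B + 2 * B"
      using dec_norm[OF Lw s2] dec_norm[OF Lu s2] nu nw by argo
    finally show ?thesis by simp
  qed
  define A1 where "A1 = ip (kapp Q u) va + 2 * ip (kapp Q z) va"
  define A2 where "A2 = ip (kapp Q w) vb + 2 * ip (kapp Q z') vb"
  have ea1: "bf Pa u u = ip u f - s * lam ^ N * ip (kapp Q u) va"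
    unfolding va_def u_def by (rule bf_resid[OF Pa uu_L2[OF Pa fL2]])
  have ea2: "bf Pa z u = ip z f - s * lam ^ N * ip (kapp Q z) va"
    unfolding va_def u_def by (rule bf_resid[OF Pa Lz])
  have ea3: "bf Pa z z \<le> 0" by (rule bf_neg[OF Pa Lz Qz])
  have expa: "bf Pa m m = bf Pa u u + 2 * bf Pa z u + bf Pa z z"
    unfolding m1 by (rule bf_expand[OF Pa Lu Lz])
  have fm1: "ip f m = ip f u + ip f z" unfolding m1 by (rule ip_add_right[OF fL2 Lu Lz])
  have Phia: "2 * ip f m - bf Pa m m \<ge> ip f u + s * lam ^ N * A1"
    using expa ea1 ea2 ea3 fm1 fz f_orth[OF Lz Qz] ip_sym[of M u f]
    unfolding A1_def by (simp add: algebra_simps)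
  have cmp: "bf Pb m m \<le> bf Pa m m"
  proof -
    have "bf Pa m m - bf Pb m m = lam * (s * ip m (kapp Q (kapp Pb m)) - s * ip m (kapp Q (kapp Pa m)))"
      unfolding bf_def by (simp add: algebra_simps)
    also have "\<dots> \<ge> 0" using H[OF Lm] lam0 by simp
    finally show ?thesis by simp
  qed
  have eb1: "bf Pb w w = ip w f - s * lam ^ N * ip (kapp Q w) vb"
    unfolding vb_def w_def by (rule bf_resid[OF Pb uu_L2[OF Pb fL2]])
  have eb2: "bf Pb z' w = ip z' f - s * lam ^ N * ip (kapp Q z') vb"
    unfolding vb_def w_def by (rule bf_resid[OF Pb Lz'])
  have eb3: "0 \<le> bf Pb z' z'" by (rule bf_pos[OF Pb Lz' Qz'])
  have expb: "bf Pb m m = bf Pb w w + 2 * bf Pb z' w + bf Pb z' z'"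
    unfolding m2 by (rule bf_expand[OF Pb Lw Lz'])
  have fm2: "ip f m = ip f w + ip f z'" unfolding m2 by (rule ip_add_right[OF fL2 Lw Lz'])
  have Phib: "2 * ip f m - bf Pb m m \<le> ip f w + s * lam ^ N * A2"
    using expb eb1 eb2 eb3 fm2 ip_sym[of M w f] ip_sym[of M z' f]
    unfolding A2_def by (simp add: algebra_simps)
  have main: "ip f u + s * lam ^ N * A1 \<le> ip f w + s * lam ^ N * A2"
    using Phia Phib cmp by argo
  have c1: "\<bar>ip (kapp Q u) va\<bar> \<le> (B + F) / 2"
    using cross_bound[OF Pa Lu, of N] nu unfolding va_def F_def by argo
  have c2: "\<bar>ip (kapp Q z) va\<bar> \<le> (4 * B + F) / 2"
    using cross_bound[OF Pa Lz, of N] nz unfolding va_def F_def by argo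
  have c3: "\<bar>ip (kapp Q w) vb\<bar> \<le> (B + F) / 2"
    using cross_bound[OF Pb Lw, of N] nw unfolding vb_def F_def by argo
  have c4: "\<bar>ip (kapp Q z') vb\<bar> \<le> (4 * B + F) / 2"
    using cross_bound[OF Pb Lz', of N] nz' unfolding vb_def F_def by argo
  have bA: "s * A2 - s * A1 \<le> 9 * B + 3 * F"
  proof -
    have "s * A2 - s * A1 \<le> \<bar>s * A2 - s * A1\<bar>" by simp
    also have "\<dots> = \<bar>A2 - A1\<bar>" using abs_s by (simp add: abs_mult right_diff_distrib[symmetric])
    also have "\<dots> \<le> 9 * B + 3 * F" unfolding A1_def A2_def using c1 c2 c3 c4 by argo
    finally show ?thesis .
  qed
  have "lam ^ N * (s * A2 - s * A1) \<le> lam ^ N * (9 * B + 3 * F)"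
    by (rule mult_left_mono[OF bA]) (use lam0 in simp)
  then show ?thesis using main unfolding u_def w_def B_def F_def by (simp add: algebra_simps)
qed

end

context core
begin

lemma series_facts:
  assumes P: "rk P" and g: "L2 M g"
  shows "summable (\<lambda>k. lam ^ k * ip g (vv P g k))"
    and "(\<lambda>N. ip g (uu P g N)) \<longlonglongrightarrow> (\<Sum>k. lam ^ k * ip g (vv P g k))"
proof -
  have b: "norm (lam ^ k * ip g (vv P g k)) \<le> ip g g * lam ^ k" for k
  proof -
    have Lv: "L2 M (vv P g k)" and nv: "ip (vv P g k) (vv P g k) \<le> ip g g" using vv_L2[OF P g] by auto
    have "\<bar>ip g (vv P g k)\<bar> \<le> (ip g g + ip (vv P g k) (vv P g k)) / 2" by (rule ip_amgm[OF g Lv])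
    also have "\<dots> \<le> ip g g" using nv by simp
    finally have "\<bar>ip g (vv P g k)\<bar> \<le> ip g g" .
    then have "lam ^ k * \<bar>ip g (vv P g k)\<bar> \<le> lam ^ k * ip g g"
      by (rule mult_left_mono) (use lam0 in simp)
    then show ?thesis using lam0 by (simp add: abs_mult mult.commute)
  qed
  have sg: "summable (\<lambda>k. ip g g * lam ^ k)"
    by (rule summable_mult) (rule summable_geometric, use lam0 lam1 in simp)
  show sm: "summable (\<lambda>k. lam ^ k * ip g (vv P g k))"
    by (rule summable_comparison_test[OF _ sg]) (use b in blast)
  have "(\<lambda>N. \<Sum>k<N. lam ^ k * ip g (vv P g k)) \<longlonglongrightarrow> (\<Sum>k. lam ^ k * ip g (vv P g k))"
    by (rule summable_LIMSEQ[OF sm])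
  then show "(\<lambda>N. ip g (uu P g N)) \<longlonglongrightarrow> (\<Sum>k. lam ^ k * ip g (vv P g k))"
    using ip_f_uu[OF P g] by simp
qed

lemma var_formula:
  assumes P: "rk P" and f: "L2 M f" and f0: "f0 = (\<lambda>x. f x - (\<integral>y. f y \<partial>M))"
  shows "var_lambda M lam f P = 2 * (\<Sum>k. lam ^ k * ip f0 (vv P f0 k)) - ip f0 f0"
proof -
  have g: "L2 M f0" unfolding f0 by (rule L2_diff[OF f L2_const[OF finite_measure_axioms]])
  have sm: "summable (\<lambda>k. lam ^ k * ip f0 (vv P f0 k))" by (rule series_facts(1)[OF P g])
  have "(\<Sum>k. lam ^ Suc k * ip f0 ((kapp P ^^ Suc k) f0)) = (\<Sum>k. (\<lambda>k. lam ^ k * ip f0 (vv P f0 k)) (Suc k))"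
    by (simp add: vv_def)
  also have "\<dots> = (\<Sum>k. lam ^ k * ip f0 (vv P f0 k)) - ip f0 f0"
    using suminf_split_head[OF sm] by (simp add: vv_0)
  finally have e: "(\<Sum>k. lam ^ Suc k * ip f0 ((kapp P ^^ Suc k) f0)) = (\<Sum>k. lam ^ k * ip f0 (vv P f0 k)) - ip f0 f0" .
  show ?thesis unfolding var_lambda_def Let_def f0[symmetric] e by simp
qed

lemma limit_compare:
  assumes Pa: "rk Pa" and Pb: "rk Pb" and g: "L2 M g"
    and H: "\<And>N. ip g (uu Pa g N) \<le> ip g (uu Pb g N) + lam ^ N * K"
  shows "(\<Sum>k. lam ^ k * ip g (vv Pa g k)) \<le> (\<Sum>k. lam ^ k * ip g (vv Pb g k))"
proof -
  have l0: "(\<lambda>N. lam ^ N * K) \<longlonglongrightarrow> 0 * K"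
    by (intro tendsto_mult tendsto_const LIMSEQ_power_zero) (use lam0 lam1 in simp)
  have "(\<lambda>N. ip g (uu Pb g N) + lam ^ N * K) \<longlonglongrightarrow> (\<Sum>k. lam ^ k * ip g (vv Pb g k)) + 0 * K"
    by (intro tendsto_add series_facts(2)[OF Pb g] l0)
  then have r: "(\<lambda>N. ip g (uu Pb g N) + lam ^ N * K) \<longlonglongrightarrow> (\<Sum>k. lam ^ k * ip g (vv Pb g k))" by simp
  show ?thesis
    by (rule LIMSEQ_le[OF series_facts(2)[OF Pa g] r]) (use H in auto)
qed

end

context setting
begin

lemma final_case:
  assumes Pa: "rk Pa" and Pb: "rk Pb" and lam0: "0 \<le> lam" and lam1: "lam < 1" and s2: "s * s = 1"
    and f: "L2 M f" and fQ: "AE x in M. kapp Q f x = s * f x"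
    and H: "\<And>m. L2 M m \<Longrightarrow> s * inner_mu M m (kapp Q (kapp Pa m)) \<le> s * inner_mu M m (kapp Q (kapp Pb m))"
  shows "var_lambda M lam f Pa \<le> var_lambda M lam f Pb"
proof -
  define c where "c = (\<integral>y. f y \<partial>M)"
  define f0 where "f0 = (\<lambda>x. f x - c)"
  have Lc: "L2 M (\<lambda>x. c)" by (rule L2_const[OF finite_measure_axioms])
  have Lf0: "L2 M f0" unfolding f0_def by (rule L2_diff[OF f Lc])
  have fi: "integrable M f" by (rule L2_integrable[OF f])
  have cs: "c = s * c"
  proof -
    have "c = (\<integral>y. kapp Q f y \<partial>M)" unfolding c_def by (rule ik_int(3)[OF Qk fi, symmetric])
    also have "\<dots> = (\<integral>y. s * f y \<partial>M)"
      by (rule integral_cong_AE) (use fQ ik_kapp_meas[OF Qk L2_meas[OF f]] L2_meas[OF f] in auto)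
    also have "\<dots> = s * c" unfolding c_def by simp
    finally show ?thesis .
  qed
  have f0Q: "AE x in M. kapp Q f0 x = s * f0 x"
  proof -
    have "AE x in M. kapp Q (\<lambda>x. f x - c) x = kapp Q f x - kapp Q (\<lambda>x. c) x \<and> kapp Q f x = s * f x"
      using ik_L2_diff[OF Qk f Lc] fQ by eventually_elim auto
    then show ?thesis
    proof (rule AE_mp, intro AE_I2 impI)
      fix x assume x: "x \<in> space M"
        and h: "kapp Q (\<lambda>x. f x - c) x = kapp Q f x - kapp Q (\<lambda>x. c) x \<and> kapp Q f x = s * f x"
      have "kapp Q (\<lambda>x. c) x = c" by (rule ik_const[OF Qk x])
      then have "kapp Q f0 x = s * f x - s * c" using h cs unfolding f0_def by simp
      then show "kapp Q f0 x = s * f0 x" unfolding f0_def by (simp add: right_diff_distrib)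
    qed
  qed
  interpret C: core2 M Q lam s f0
    by (intro core2.intro core.intro core_axioms.intro core2_axioms.intro setting_axioms)
       (use lam0 lam1 s2 Lf0 f0Q in auto)
  have ineq: "\<And>N. inner_mu M f0 (C.uu Pa f0 N) \<le> inner_mu M f0 (C.uu Pb f0 N) + lam ^ N * (9 * (inner_mu M f0 f0 / (1 - lam)\<^sup>2) + 3 * inner_mu M f0 f0)"
    by (rule C.core_ineq) (use Pa Pb H in auto)
  have le: "(\<Sum>k. lam ^ k * inner_mu M f0 (C.vv Pa f0 k)) \<le> (\<Sum>k. lam ^ k * inner_mu M f0 (C.vv Pb f0 k))"
    by (rule C.limit_compare[OF _ _ Lf0 ineq]) (use Pa Pb in auto)
  have "var_lambda M lam f Pa = 2 * (\<Sum>k. lam ^ k * inner_mu M f0 (C.vv Pa f0 k)) - inner_mu M f0 f0"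
    by (rule C.var_formula) (use Pa f in \<open>auto simp: f0_def c_def\<close>)
  moreover have "var_lambda M lam f Pb = 2 * (\<Sum>k. lam ^ k * inner_mu M f0 (C.vv Pb f0 k)) - inner_mu M f0 f0"
    by (rule C.var_formula) (use Pb f in \<open>auto simp: f0_def c_def\<close>)
  ultimately show ?thesis using le by simp
qed

end

theorem corollary2p10:
  fixes mu :: "'a measure" and Q P1 P2 :: "'a \<Rightarrow> 'a measure"
  assumes "prob_space mu"
    and "\<forall>z\<in>space mu. {z} \<in> sets mu"
    and "markov_kernel mu Q" and "isometric_involution mu Q" and "mu \<bind> Q = mu"
    and "markov_kernel mu P1" and "markov_kernel mu P2"
    and "muQ_reversible mu Q P1" and "muQ_reversible mu Q P2"
    and "(\<forall>z\<in>space mu. \<forall>A\<in>sets mu.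
            measure (kcomp P1 Q z) (A - {z}) \<ge> measure (kcomp P2 Q z) (A - {z}))
       \<or> (\<forall>z\<in>space mu. \<forall>A\<in>sets mu.
            measure (kcomp Q P1 z) (A - {z}) \<ge> measure (kcomp Q P2 z) (A - {z}))"
    and "0 \<le> lam" and "lam < 1"
  shows "(\<forall>f. L2 mu f \<longrightarrow> (AE z in mu. kapp Q f z = f z) \<longrightarrow>
            var_lambda mu lam f P1 \<le> var_lambda mu lam f P2)
       \<and> (\<forall>f. L2 mu f \<longrightarrow> (AE z in mu. kapp Q f z = - f z) \<longrightarrow>
            var_lambda mu lam f P1 \<ge> var_lambda mu lam f P2)"
proof -
  have Qk: "ikern mu Q" using assms(3,5) by (simp add: ikern_def)
  interpret S: setting mu Q
    by (intro setting.intro setting_axioms.intro) (use assms(1) Qk assms(4) in auto)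
  have r1: "S.rk P1" using assms(6,8) by (simp add: S.rk_def)
  have r2: "S.rk P2" using assms(7,9) by (simp add: S.rk_def)
  have i1: "ikern mu P1" by (rule S.rk_ikern[OF r1])
  have i2: "ikern mu P2" by (rule S.rk_ikern[OF r2])
  have ord: "inner_mu mu m (kapp Q (kapp P1 m)) \<le> inner_mu mu m (kapp Q (kapp P2 m))"
    if m: "L2 mu m" for m
    using assms(10)
  proof
    assume A: "\<forall>z\<in>space mu. \<forall>A\<in>sets mu. measure (kcomp P1 Q z) (A - {z}) \<ge> measure (kcomp P2 Q z) (A - {z})"
    define g where "g = kapp Q m"
    have Lg: "L2 mu g" unfolding g_def by (rule S.Q_L2[OF m])
    have conv: "inner_mu mu g (kapp (kcomp P Q) g) = inner_mu mu m (kapp Q (kapp P m))"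
      if P: "ikern mu P" for P
    proof -
      have LPm: "L2 mu (kapp P m)" by (rule S.ik_L2(1)[OF P m])
      have LQg: "L2 mu (kapp Q g)" by (rule S.Q_L2[OF Lg])
      have "inner_mu mu g (kapp (kcomp P Q) g) = inner_mu mu g (kapp P (kapp Q g))"
        by (rule ip_cong_AE[OF Lg S.ik_L2(1)[OF S.kcomp_ikern[OF P Qk] Lg] Lg S.ik_L2(1)[OF P LQg]])
           (use S.kcomp_kapp[OF P Qk Lg] in auto)
      also have "\<dots> = inner_mu mu g (kapp P m)"
        by (rule ip_cong_AE[OF Lg S.ik_L2(1)[OF P LQg] Lg LPm])
           (use S.ik_L2_cong[OF P LQg m] S.QQ[OF m] in \<open>auto simp: g_def\<close>)
      also have "\<dots> = inner_mu mu m (kapp Q (kapp P m))"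
        unfolding g_def by (rule S.Q_sa[OF m LPm])
      finally show ?thesis .
    qed
    have "inner_mu mu g (kapp (kcomp P1 Q) g) \<le> inner_mu mu g (kapp (kcomp P2 Q) g)"
      by (rule S.dirichlet[OF S.kcomp_ikern[OF i1 Qk] S.kcomp_ikern[OF i2 Qk] assms(2) A Lg])
    then show ?thesis using conv[OF i1] conv[OF i2] by simp
  next
    assume B: "\<forall>z\<in>space mu. \<forall>A\<in>sets mu. measure (kcomp Q P1 z) (A - {z}) \<ge> measure (kcomp Q P2 z) (A - {z})"
    have conv: "inner_mu mu m (kapp (kcomp Q P) m) = inner_mu mu m (kapp Q (kapp P m))"
      if P: "ikern mu P" for P
      by (rule ip_cong_AE[OF m S.ik_L2(1)[OF S.kcomp_ikern[OF Qk P] m] m S.Q_L2[OF S.ik_L2(1)[OF P m]]])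
         (use S.kcomp_kapp[OF Qk P m] in auto)
    have "inner_mu mu m (kapp (kcomp Q P1) m) \<le> inner_mu mu m (kapp (kcomp Q P2) m)"
      by (rule S.dirichlet[OF S.kcomp_ikern[OF Qk i1] S.kcomp_ikern[OF Qk i2] assms(2) B m])
    then show ?thesis using conv[OF i1] conv[OF i2] by simp
  qed
  show ?thesis
  proof (intro conjI allI impI)
    fix f assume f: "L2 mu f" and fQ: "AE z in mu. kapp Q f z = f z"
    show "var_lambda mu lam f P1 \<le> var_lambda mu lam f P2"
      by (rule S.final_case[OF r1 r2 assms(11,12), of 1 f]) (use f fQ ord in auto)
  next
    fix f assume f: "L2 mu f" and fQ: "AE z in mu. kapp Q f z = - f z"
    show "var_lambda mu lam f P2 \<le> var_lambda mu lam f P1"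
      by (rule S.final_case[OF r2 r1 assms(11,12), of "-1" f]) (use f fQ ord in auto)
  qed
qed

end
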